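(* For every unweighted instance of the atomic two-stage facility location game and every facility placement profile $\mathbf{s}$, there exists a rounded client profile $\sigma(\mathbf{s})$.
   Context: Setting: a finite directed graph $H=(V,E)$ whose vertices are clients, all of weight $w(v)=1$ (unweighted); a finite set $F$ of facility agents; a facility placement profile $\mathbf{s}=(s_f)_{f\in F}$ with $s_f\in V$ (any feasibility restrictions on locations are irrelevant here). Let $N(v)=\{v\}\cup\{u:(v,u)\in E\}$, $N_{\mathbf{s}}(v)=\{f\in F:s_f\in N(v)\}$, $A_{\mathbf{s}}(f)=\{v: f\in N_{\mathbf{s}}(v)\}$, $A_{\mathbf{s}}(T)=\bigcup_{f\in T}A_{\mathbf{s}}(f)$, $w(X)=|X|$. A client profile $\sigma(\mathbf{s})$ assigns to each client $v$ numbers $\sigma(\mathbf{s})_{v,f}\in[0,1]$ with $\sigma(\mathbf{s})_{v,f}=0$ for $f\notin N_{\mathbf{s}}(v)$ and $\sum_f\sigma(\mathbf{s})_{v,f}=1$ whenever $N_{\mathbf{s}}(v)\neq\varnothing$. Load $\ell_f=\sum_v\sigma(\mathbf{s})_{v,f}w(v)$. Minimum neighborhood set: for nonempty $F^*\subseteq F$, $V^*\subseteq V$, $\mathrm{MNS}_{\mathbf{s}}(F^*,V^* )$ is the largest-cardinality subset among the nonempty $T\subseteq F^*$ minimizing $w(A_{\mathbf{s}}(T)\cap V^* )/|T|$. Class set: inductively, while facilities remain, $F_i=\mathrm{MNS}_{\mathbf{s}}(F\setminus\bigcup_{j<i}F_j, V\setminus\bigcup_{j<i}V_j)$, $V_i=A_{\mathbf{s}}(F_i)\setminus\bigcup_{j<i}V_j$,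 $C_i=(F_i,V_i)$, $\ell(C_i)=w(V_i)/|F_i|$. A client profile $\sigma(\mathbf{s})$ is rounded if for every class $C_i$ and every $f\in F_i$ we have $\ell_f\in\{\lfloor\ell(C_i)\rfloor,\lceil\ell(C_i)\rceil\}$, and for every class $C_i$ and every client $v\in V_i$ there is exactly one $g\in F_i$ with $\sigma(\mathbf{s})_{v,g}=1$. *)

theory Defs
  imports Main "HOL-Library.Extended_Real" Complex_Main
begin

text \<open>Clients are the vertices V of a directed graph with edge set E;
  facilities F with placement s. All client weights are 1.\<close>

definition nbh :: "('v \<times> 'v) set \<Rightarrow> 'v \<Rightarrow> 'v set" where
  "nbh E v = {v} \<union> {u. (v, u) \<in> E}"

definition Nfac :: "('v \<times> 'v) set \<Rightarrow> 'f set \<Rightarrow> ('f \<Rightarrow> 'v) \<Rightarrow> 'v \<Rightarrow> 'f set" where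
  "Nfac E F s v = {f \<in> F. s f \<in> nbh E v}"

definition Acl :: "'v set \<Rightarrow> ('v \<times> 'v) set \<Rightarrow> 'f set \<Rightarrow> ('f \<Rightarrow> 'v) \<Rightarrow> 'f set \<Rightarrow> 'v set" where
  "Acl V E F s T = {v \<in> V. \<exists>f \<in> T. f \<in> Nfac E F s v}"

definition ratio :: "'v set \<Rightarrow> ('v \<times> 'v) set \<Rightarrow> 'f set \<Rightarrow> ('f \<Rightarrow> 'v) \<Rightarrow> 'v set \<Rightarrow> 'f set \<Rightarrow> real" where
  "ratio V E F s Vs T = real (card (Acl V E F s T \<inter> Vs)) / real (card T)"

definition minimizers :: "'v set \<Rightarrow> ('v \<times> 'v) set \<Rightarrow> 'f set \<Rightarrow> ('f \<Rightarrow> 'v) \<Rightarrow> 'f set \<Rightarrow> 'v set \<Rightarrow> 'f set set" where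
  "minimizers V E F s Fs Vs = {T. T \<noteq> {} \<and> T \<subseteq> Fs \<and>
      (\<forall>T'. T' \<noteq> {} \<and> T' \<subseteq> Fs \<longrightarrow> ratio V E F s Vs T \<le> ratio V E F s Vs T')}"

definition MNS :: "'v set \<Rightarrow> ('v \<times> 'v) set \<Rightarrow> 'f set \<Rightarrow> ('f \<Rightarrow> 'v) \<Rightarrow> 'f set \<Rightarrow> 'v set \<Rightarrow> 'f set" where
  "MNS V E F s Fs Vs = (SOME T. T \<in> minimizers V E F s Fs Vs \<and>
      (\<forall>T' \<in> minimizers V E F s Fs Vs. card T' \<le> card T))"

fun remaining :: "'v set \<Rightarrow> ('v \<times> 'v) set \<Rightarrow> 'f set \<Rightarrow> ('f \<Rightarrow> 'v) \<Rightarrow> nat \<Rightarrow> 'f set \<times> 'v set" where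
  "remaining V E F s 0 = (F, V)"
| "remaining V E F s (Suc i) =
     (let (Fr, Vr) = remaining V E F s i;
          Fi = (if Fr = {} then {} else MNS V E F s Fr Vr);
          Vi = Acl V E F s Fi \<inter> Vr
      in (Fr - Fi, Vr - Vi))"

text \<open>Class C_i = (classF i, classV i); it is a genuine class iff classF i is nonempty.\<close>
definition classF :: "'v set \<Rightarrow> ('v \<times> 'v) set \<Rightarrow> 'f set \<Rightarrow> ('f \<Rightarrow> 'v) \<Rightarrow> nat \<Rightarrow> 'f set" where
  "classF V E F s i = (let (Fr, Vr) = remaining V E F s i in
      if Fr = {} then {} else MNS V E F s Fr Vr)"

definition classV :: "'v set \<Rightarrow> ('v \<times> 'v) set \<Rightarrow> 'f set \<Rightarrow> ('f \<Rightarrow> 'v) \<Rightarrow> nat \<Rightarrow> 'v set" where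
  "classV V E F s i = Acl V E F s (classF V E F s i) \<inter> snd (remaining V E F s i)"

definition class_load :: "'v set \<Rightarrow> ('v \<times> 'v) set \<Rightarrow> 'f set \<Rightarrow> ('f \<Rightarrow> 'v) \<Rightarrow> nat \<Rightarrow> real" where
  "class_load V E F s i = real (card (classV V E F s i)) / real (card (classF V E F s i))"

text \<open>Client profile: sigma v f is the fraction of client v assigned to facility f.\<close>
definition client_profile :: "'v set \<Rightarrow> ('v \<times> 'v) set \<Rightarrow> 'f set \<Rightarrow> ('f \<Rightarrow> 'v) \<Rightarrow> ('v \<Rightarrow> 'f \<Rightarrow> real) \<Rightarrow> bool" where
  "client_profile V E F s \<sigma> \<longleftrightarrow>
     (\<forall>v \<in> V. \<forall>f \<in> F. 0 \<le> \<sigma> v f \<and> \<sigma> v f \<le> 1 \<and> (f \<notin> Nfac E F s v \<longrightarrow> \<sigma> v f = 0)) \<and>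
     (\<forall>v \<in> V. Nfac E F s v \<noteq> {} \<longrightarrow> (\<Sum>f \<in> F. \<sigma> v f) = 1)"

definition load :: "'v set \<Rightarrow> ('v \<Rightarrow> 'f \<Rightarrow> real) \<Rightarrow> 'f \<Rightarrow> real" where
  "load V \<sigma> f = (\<Sum>v \<in> V. \<sigma> v f)"

definition rounded :: "'v set \<Rightarrow> ('v \<times> 'v) set \<Rightarrow> 'f set \<Rightarrow> ('f \<Rightarrow> 'v) \<Rightarrow> ('v \<Rightarrow> 'f \<Rightarrow> real) \<Rightarrow> bool" where
  "rounded V E F s \<sigma> \<longleftrightarrow> client_profile V E F s \<sigma> \<and>
     (\<forall>i. classF V E F s i \<noteq> {} \<longrightarrow>
        (\<forall>f \<in> classF V E F s i.
            load V \<sigma> f = of_int \<lfloor>class_load V E F s i\<rfloor> \<or>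
            load V \<sigma> f = of_int \<lceil>class_load V E F s i\<rceil>) \<and>
        (\<forall>v \<in> classV V E F s i. \<exists>!g. g \<in> classF V E F s i \<and> \<sigma> v g = 1))"

end

theory Submission
  imports Defs
begin


definition validA :: "'v set \<Rightarrow> 'f set \<Rightarrow> ('v \<Rightarrow> 'f \<Rightarrow> bool) \<Rightarrow> ('v \<Rightarrow> 'f) \<Rightarrow> bool" where
  "validA W T adj \<sigma> \<longleftrightarrow> (\<forall>w\<in>W. \<sigma> w \<in> T \<and> adj w (\<sigma> w))"

definition ld :: "'v set \<Rightarrow> ('v \<Rightarrow> 'f) \<Rightarrow> 'f \<Rightarrow> nat" where
  "ld W \<sigma> f = card {w\<in>W. \<sigma> w = f}"

definition stp :: "'v set \<Rightarrow> 'f set \<Rightarrow> ('v \<Rightarrow> 'f \<Rightarrow> bool) \<Rightarrow> ('v \<Rightarrow> 'f) \<Rightarrow> ('f \<times> 'f) set" where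
  "stp W T adj \<sigma> = {(x,y). \<exists>w\<in>W. \<sigma> w = x \<and> adj w y \<and> y \<in> T}"

lemma move:
  assumes "finite W" "validA W T adj \<sigma>" "w \<in> W" "adj w y" "y \<in> T"
  shows "validA W T adj (\<sigma>(w:=y)) \<and> (\<forall>z. int (ld W (\<sigma>(w:=y)) z) = int (ld W \<sigma> z) - (if z = \<sigma> w then 1 else 0) + (if z = y then 1 else 0))"
proof
  show "validA W T adj (\<sigma>(w:=y))" using assms by (auto simp: validA_def)
  show "\<forall>z. int (ld W (\<sigma>(w:=y)) z) = int (ld W \<sigma> z) - (if z = \<sigma> w then 1 else 0) + (if z = y then 1 else 0)"
  proof
    fix z
    have e: "{w'\<in>W. (\<sigma>(w:=y)) w' = z} = ({w'\<in>W. \<sigma> w' = z} - {w}) \<union> (if z = y then {w} else {})"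
      using assms by auto
    have f: "finite {w'\<in>W. \<sigma> w' = z}" using assms by auto
    have c1: "int (card ({w'\<in>W. \<sigma> w' = z} - {w})) = int (card {w'\<in>W. \<sigma> w' = z}) - (if z = \<sigma> w then 1 else 0)"
    proof (cases "z = \<sigma> w")
      case True
      then have mem: "w \<in> {w'\<in>W. \<sigma> w' = z}" using assms by auto
      have c: "card ({w'\<in>W. \<sigma> w' = z} - {w}) = card {w'\<in>W. \<sigma> w' = z} - 1"
        using card_Diff_singleton[OF mem] .
      have "card {w'\<in>W. \<sigma> w' = z} > 0" using f mem card_gt_0_iff by blast
      then show ?thesis using c True by simp
    next
      case False
      then show ?thesis by (simp add: Diff_insert_absorb)
    qed
    show "int (ld W (\<sigma>(w:=y)) z) = int (ld W \<sigma> z) - (if z = \<sigma> w then 1 else 0) + (if z = y then 1 else 0)"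
      unfolding ld_def e using c1 f assms(3) by (auto simp: card_insert_if)
  qed
qed

lemma avoid:
  "(x,y) \<in> (r::('a\<times>'a) set)^^n \<Longrightarrow> (\<forall>k\<le>n. (g,y) \<notin> r^^k) \<Longrightarrow> (x,y) \<in> {(a,b). (a,b)\<in>r \<and> a \<noteq> g}^^n"
proof (induction n arbitrary: x)
  case 0
  then show ?case by (auto elim: relpow_0_E)
next
  case (Suc n)
  obtain x1 where x1: "(x,x1) \<in> r" "(x1,y) \<in> r^^n" using relpow_Suc_D2[OF Suc.prems(1)] by blast
  have xg: "x \<noteq> g" using Suc.prems by (metis le_refl)
  have ih: "(x1,y) \<in> {(a,b). (a,b)\<in>r \<and> a \<noteq> g}^^n" using Suc.IH x1 Suc.prems(2) by auto
  have "(x,x1) \<in> {(a,b). (a,b)\<in>r \<and> a \<noteq> g}" using xg x1(1) by simp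
  from relpow_Suc_I2[OF this ih] show ?case .
qed

lemma relpow_sub: "(r::('a\<times>'a) set) \<subseteq> s \<Longrightarrow> (x,y) \<in> r^^n \<Longrightarrow> (x,y) \<in> s^^n"
proof (induction n arbitrary: y)
  case 0 then show ?case by (auto elim: relpow_0_E)
next
  case (Suc n) then show ?case by auto
qed

lemma ld_out: "validA W T adj \<sigma> \<Longrightarrow> z \<notin> T \<Longrightarrow> ld W \<sigma> z = 0"
  unfolding ld_def validA_def by (metis (mono_tags, lifting) card.empty empty_Collect_eq)

lemma shift:
  assumes "finite W"
  shows "validA W T adj \<sigma> \<Longrightarrow> (g,h) \<in> (stp W T adj \<sigma>)^^n \<Longrightarrow>
    \<exists>\<sigma>'. validA W T adj \<sigma>' \<and> (\<forall>z. int (ld W \<sigma>' z) = int (ld W \<sigma> z) - (if z = g then 1 else 0) + (if z = h then 1 else 0))"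
proof (induction n arbitrary: \<sigma> g rule: less_induct)
  case (less n)
  show ?case
  proof (cases "g = h")
    case True then show ?thesis using less.prems by auto
  next
    case gh: False
    show ?thesis
    proof (cases "\<exists>k<n. (g,h) \<in> (stp W T adj \<sigma>)^^k")
      case True
      then obtain k where "k < n" "(g,h) \<in> (stp W T adj \<sigma>)^^k" by blast
      then show ?thesis using less.IH less.prems by blast
    next
      case False
      have "n \<noteq> 0" using gh less.prems by (metis relpow_0_E)
      then obtain m where n: "n = Suc m" using not0_implies_Suc by blast
      have "(g,h) \<in> (stp W T adj \<sigma>)^^Suc m" using less.prems(2) n by simp
      from relpow_Suc_D2[OF this] obtain g1 where g1: "(g,g1) \<in> stp W T adj \<sigma>" "(g1,h) \<in> (stp W T adj \<sigma>)^^m"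
        by blast
      obtain w where w: "w \<in> W" "\<sigma> w = g" "adj w g1" "g1 \<in> T" using g1(1) unfolding stp_def by blast
      define \<sigma>1 where "\<sigma>1 = \<sigma>(w:=g1)"
      have mv: "validA W T adj \<sigma>1 \<and> (\<forall>z. int (ld W \<sigma>1 z) = int (ld W \<sigma> z) - (if z = g then 1 else 0) + (if z = g1 then 1 else 0))"
        using move[OF assms less.prems(1) w(1,3,4)] w(2) unfolding \<sigma>1_def by simp
      have p1: "(g1,h) \<in> {(a,b). (a,b)\<in>stp W T adj \<sigma> \<and> a \<noteq> g}^^m"
        using avoid[OF g1(2)] False n by auto
      have p2: "{(a,b). (a,b)\<in>stp W T adj \<sigma> \<and> a \<noteq> g} \<subseteq> stp W T adj \<sigma>1"
        unfolding stp_def \<sigma>1_def using w(2) by auto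
      have "(g1,h) \<in> (stp W T adj \<sigma>1)^^m" using relpow_sub[OF p2 p1] .
      then obtain \<sigma>' where "validA W T adj \<sigma>'" "\<forall>z. int (ld W \<sigma>' z) = int (ld W \<sigma>1 z) - (if z = g1 then 1 else 0) + (if z = h then 1 else 0)"
        using less.IH[of m \<sigma>1 g1] n mv by auto
      then show ?thesis using mv by (intro exI[of _ \<sigma>']) auto
    qed
  qed
qed


lemma sum_ld:
  assumes "finite W" "finite S"
  shows "(\<Sum>f\<in>S. ld W \<sigma> f) = card {w\<in>W. \<sigma> w \<in> S}"
proof -
  have "{w\<in>W. \<sigma> w \<in> S} = (\<Union>f\<in>S. {w\<in>W. \<sigma> w = f})" by auto
  moreover have "card (\<Union>f\<in>S. {w\<in>W. \<sigma> w = f}) = (\<Sum>f\<in>S. card {w\<in>W. \<sigma> w = f})"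
    by (rule card_UN_disjoint) (use assms in auto)
  ultimately have "card {w\<in>W. \<sigma> w \<in> S} = (\<Sum>f\<in>S. card {w\<in>W. \<sigma> w = f})" by simp
  then show ?thesis by (simp add: ld_def)
qed

lemma phi_change:
  assumes "finite T" "g \<in> T" "h \<in> T" "g \<noteq> h"
    and L: "\<forall>z. L' z = L z - (if z = g then 1 else 0) + (if z = h then 1 else 0)"
  shows "(\<Sum>f\<in>T. (L' f)^2) = (\<Sum>f\<in>T. (L f)^2) - 2 * L g + 2 * L h + (2::int)"
proof -
  have "\<forall>f. (L' f)^2 = (L f)^2 + ((if f = g then 1 - 2 * L g else 0) + (if f = h then 2 * L h + 1 else 0))"
  proof
    fix f
    show "(L' f)^2 = (L f)^2 + ((if f = g then 1 - 2 * L g else 0) + (if f = h then 2 * L h + 1 else 0))"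
    proof (cases "f = g")
      case True
      have e: "L' f = L f - 1" using L assms(4) True by simp
      show ?thesis unfolding e using True assms(4) by (simp add: power2_eq_square algebra_simps)
    next
      case False
      show ?thesis
      proof (cases "f = h")
        case True
        have e: "L' f = L f + 1" using L False True by simp
        show ?thesis unfolding e using True False by (simp add: power2_eq_square algebra_simps)
      next
        case False2: False
        then have "L' f = L f" using L False by simp
        then show ?thesis using False False2 by simp
      qed
    qed
  qed
  then have "(\<Sum>f\<in>T. (L' f)^2) = (\<Sum>f\<in>T. (L f)^2) + ((\<Sum>f\<in>T. (if f = g then 1 - 2 * L g else 0)) + (\<Sum>f\<in>T. (if f = h then 2 * L h + 1 else 0)))"
    by (simp add: sum.distrib)
  also have "\<dots> = (\<Sum>f\<in>T. (L f)^2) + ((1 - 2 * L g) + (2 * L h + 1))"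
    using assms by simp
  finally show ?thesis by simp
qed

lemma balanced:
  fixes W :: "'v set" and T :: "'f set"
  assumes fW: "finite W" and fT: "finite T" and Tne: "T \<noteq> {}"
    and cov: "\<forall>w\<in>W. \<exists>f\<in>T. adj w f"
    and hall: "\<forall>S\<subseteq>T. card W * card S \<le> card {w\<in>W. \<exists>f\<in>S. adj w f} * card T"
  shows "\<exists>\<sigma>. validA W T adj \<sigma> \<and> (\<forall>f\<in>T. int (ld W \<sigma> f) * int (card T) < int (card W) + int (card T)
           \<and> int (card W) < (int (ld W \<sigma> f) + 1) * int (card T))"
proof -
  define \<Phi> where "\<Phi> \<sigma> = (\<Sum>f\<in>T. (ld W \<sigma> f)^2)" for \<sigma>
  define \<sigma>0 where "\<sigma>0 w = (SOME f. f \<in> T \<and> adj w f)" for w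
  have v0: "validA W T adj \<sigma>0" unfolding validA_def \<sigma>0_def
  proof
    fix w assume "w \<in> W"
    then have "\<exists>f. f \<in> T \<and> adj w f" using cov by blast
    then show "(SOME f. f \<in> T \<and> adj w f) \<in> T \<and> adj w (SOME f. f \<in> T \<and> adj w f)" by (rule someI_ex)
  qed
  obtain \<sigma> where v: "validA W T adj \<sigma>" and mn: "\<forall>\<sigma>'. validA W T adj \<sigma>' \<longrightarrow> \<Phi> \<sigma> \<le> \<Phi> \<sigma>'"
    using ex_has_least_nat[of "validA W T adj" \<sigma>0 \<Phi>] v0 by blast
  let ?L = "ld W \<sigma>"
  let ?r = "stp W T adj \<sigma>"
  have key: "?L g \<le> ?L h + 1" if gh: "(g,h) \<in> ?r\<^sup>*" for g h
  proof (cases "g = h")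
    case True then show ?thesis by simp
  next
    case False
    obtain n where "(g,h) \<in> ?r^^n" using gh unfolding rtrancl_power by blast
    then obtain \<sigma>' where v': "validA W T adj \<sigma>'" and L': "\<forall>z. int (ld W \<sigma>' z) = int (?L z) - (if z = g then 1 else 0) + (if z = h then 1 else 0)"
      using shift[OF fW v] by blast
    have gT: "g \<in> T"
    proof (rule ccontr)
      assume "g \<notin> T"
      then have "?L g = 0" using ld_out v by metis
      then have "int (ld W \<sigma>' g) = -1" using L' False by simp
      then show False by simp
    qed
    have hT: "h \<in> T"
    proof (rule ccontr)
      assume "h \<notin> T"
      then have "ld W \<sigma>' h = 0" using ld_out v' by metis
      moreover have "int (ld W \<sigma>' h) = int (?L h) + 1" using L' False by simp
      ultimately show False by simp
    qed
    have "(\<Sum>f\<in>T. (int (ld W \<sigma>' f))^2) = (\<Sum>f\<in>T. (int (?L f))^2) - 2 * int (?L g) + 2 * int (?L h) + 2"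
      using phi_change[OF fT gT hT False L'] .
    moreover have "\<Phi> \<sigma> \<le> \<Phi> \<sigma>'" using mn v' by blast
    then have "int (\<Phi> \<sigma>) \<le> int (\<Phi> \<sigma>')" by simp
    then have "(\<Sum>f\<in>T. (int (?L f))^2) \<le> (\<Sum>f\<in>T. (int (ld W \<sigma>' f))^2)"
      unfolding \<Phi>_def by simp
    ultimately show ?thesis by linarith
  qed
  have sumT: "(\<Sum>f\<in>T. ?L f) = card W"
  proof -
    have "{w\<in>W. \<sigma> w \<in> T} = W" using v unfolding validA_def by auto
    then show ?thesis using sum_ld[OF fW fT] by simp
  qed
  have cTpos: "card T > 0" using fT Tne by (simp add: card_gt_0_iff)
  define f0 where "f0 = arg_min_on ?L T"
  have f0: "f0 \<in> T" "\<forall>f\<in>T. ?L f0 \<le> ?L f"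
    unfolding f0_def using arg_min_if_finite(1)[OF fT Tne] arg_min_least[OF fT Tne] by auto
  define R where "R = {g\<in>T. (g,f0) \<in> ?r\<^sup>*}"
  have f0R: "f0 \<in> R" unfolding R_def using f0 by simp
  have RT: "R \<subseteq> T" unfolding R_def by auto
  have fR: "finite R" using RT fT finite_subset by blast
  have NR: "{w\<in>W. \<exists>f\<in>R. adj w f} \<subseteq> {w\<in>W. \<sigma> w \<in> R}"
  proof
    fix w assume w: "w \<in> {w\<in>W. \<exists>f\<in>R. adj w f}"
    then obtain g where g: "g \<in> R" "adj w g" "w \<in> W" by blast
    have "(\<sigma> w, g) \<in> ?r" unfolding stp_def using g RT by auto
    then have "(\<sigma> w, f0) \<in> ?r\<^sup>*" using g unfolding R_def by auto
    moreover have "\<sigma> w \<in> T" using v g unfolding validA_def by auto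
    ultimately show "w \<in> {w\<in>W. \<sigma> w \<in> R}" unfolding R_def using g by auto
  qed
  have cNR: "card {w\<in>W. \<exists>f\<in>R. adj w f} \<le> (\<Sum>f\<in>R. ?L f)"
    using card_mono[OF _ NR] fW sum_ld[OF fW fR] by simp
  have Rb: "\<forall>g\<in>R. ?L g \<le> ?L f0 + 1" using key unfolding R_def by auto
  have cR1: "card R \<ge> 1" using f0R fR by (metis One_nat_def Suc_leI card_gt_0_iff empty_iff)
  have sR: "(\<Sum>f\<in>R. ?L f) + 1 \<le> (?L f0 + 1) * card R"
  proof -
    have "(\<Sum>f\<in>R. ?L f) = ?L f0 + (\<Sum>f\<in>R-{f0}. ?L f)" using f0R fR by (simp add: sum.remove)
    also have "(\<Sum>f\<in>R-{f0}. ?L f) \<le> (\<Sum>f\<in>R-{f0}. ?L f0 + 1)" using Rb by (intro sum_mono) auto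
    also have "\<dots> = (?L f0 + 1) * (card R - 1)" using f0R fR by simp
    finally have A: "(\<Sum>f\<in>R. ?L f) \<le> ?L f0 + (?L f0 + 1) * (card R - 1)" by simp
    obtain c where c: "card R = Suc c" using cR1 by (cases "card R") auto
    show ?thesis using A unfolding c by simp
  qed
  have hR: "card W * card R \<le> card {w\<in>W. \<exists>f\<in>R. adj w f} * card T" using hall RT by blast
  have "card W * card R < ((?L f0 + 1) * card T) * card R"
  proof -
    have "card W * card R \<le> (\<Sum>f\<in>R. ?L f) * card T" using hR cNR by (meson le_trans mult_le_mono1)
    also have "\<dots> < (?L f0 + 1) * card R * card T" using sR cTpos by simp
    also have "(?L f0 + 1) * card R * card T = ((?L f0 + 1) * card T) * card R" by (metis mult.commute mult.assoc)
    finally show ?thesis .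
  qed
  then have low: "card W < (?L f0 + 1) * card T"
    using mult_less_cancel2 by blast
  define f1 where "f1 = arg_min_on (\<lambda>f. - int (?L f)) T"
  have f1: "f1 \<in> T" "\<forall>f\<in>T. ?L f \<le> ?L f1"
    unfolding f1_def using arg_min_if_finite(1)[OF fT Tne] arg_min_least[OF fT Tne, of _ "\<lambda>f. - int (?L f)"] by auto
  define D where "D = {g\<in>T. (f1,g) \<in> ?r\<^sup>*}"
  have f1D: "f1 \<in> D" unfolding D_def using f1 by simp
  have DT: "D \<subseteq> T" unfolding D_def by auto
  have fD: "finite D" using DT fT finite_subset by blast
  have ND: "{w\<in>W. \<exists>f\<in>T-D. adj w f} \<subseteq> {w\<in>W. \<sigma> w \<in> T-D}"
  proof
    fix w assume w: "w \<in> {w\<in>W. \<exists>f\<in>T-D. adj w f}"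
    then obtain g where g: "g \<in> T - D" "adj w g" "w \<in> W" by blast
    have st: "(\<sigma> w, g) \<in> ?r" unfolding stp_def using g by auto
    have swT: "\<sigma> w \<in> T" using v g unfolding validA_def by auto
    have "\<sigma> w \<notin> D"
    proof
      assume "\<sigma> w \<in> D"
      then have "(f1, g) \<in> ?r\<^sup>*" using st unfolding D_def by auto
      then show False using g unfolding D_def by auto
    qed
    then show "w \<in> {w\<in>W. \<sigma> w \<in> T-D}" using swT g by auto
  qed
  have fTD: "finite (T-D)" using fT by simp
  have cND: "card {w\<in>W. \<exists>f\<in>T-D. adj w f} \<le> (\<Sum>f\<in>T-D. ?L f)"
    using card_mono[OF _ ND] fW sum_ld[OF fW fTD] by simp
  have split: "(\<Sum>f\<in>T-D. ?L f) + (\<Sum>f\<in>D. ?L f) = card W"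
    using sum.subset_diff[OF DT fT, of ?L] sumT by simp
  have Db: "\<forall>g\<in>D. ?L f1 \<le> ?L g + 1" using key unfolding D_def by auto
  have cD1: "card D \<ge> 1" using f1D fD by (metis One_nat_def Suc_leI card_gt_0_iff empty_iff)
  have sD: "(int (?L f1) - 1) * int (card D) + 1 \<le> (\<Sum>f\<in>D. int (?L f))"
  proof -
    have e: "(\<Sum>f\<in>D. int (?L f)) = int (?L f1) + (\<Sum>f\<in>D-{f1}. int (?L f))" using f1D fD by (simp add: sum.remove)
    have m: "(\<Sum>f\<in>D-{f1}. int (?L f1) - 1) \<le> (\<Sum>f\<in>D-{f1}. int (?L f))" using Db by (intro sum_mono) auto
    have c: "(\<Sum>f\<in>D-{f1}. int (?L f1) - 1) = (int (?L f1) - 1) * (int (card D) - 1)" using f1D fD cD1 by (simp add: of_nat_diff)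
    have "(int (?L f1) - 1) * int (card D) + 1 = (int (?L f1) - 1) * (int (card D) - 1) + int (?L f1)"
      by (simp add: algebra_simps)
    then show ?thesis using e m c by linarith
  qed
  have hD: "card W * card (T-D) \<le> card {w\<in>W. \<exists>f\<in>T-D. adj w f} * card T" using hall by blast
  have cTD: "card (T-D) = card T - card D" using DT fD by (simp add: card_Diff_subset)
  have cDT: "card D \<le> card T" using DT fT card_mono by blast
  define SD where "SD = (\<Sum>f\<in>D. int (?L f))"
  have A0: "int (card W) * (int (card T) - int (card D)) \<le> (int (card W) - SD) * int (card T)"
  proof -
    have "card W * card (T-D) \<le> (\<Sum>f\<in>T-D. ?L f) * card T"
      using hD cND by (meson le_trans mult_le_mono1)
    then have "int (card W * card (T-D)) \<le> int ((\<Sum>f\<in>T-D. ?L f) * card T)" by (simp only: of_nat_le_iff)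
    moreover have "int (\<Sum>f\<in>T-D. ?L f) = int (card W) - SD"
    proof -
      have s1: "int (\<Sum>f\<in>T-D. ?L f) + int (\<Sum>f\<in>D. ?L f) = int (card W)" using arg_cong[OF split, of int] by simp
      have s2: "int (\<Sum>f\<in>D. ?L f) = SD" unfolding SD_def by simp
      show ?thesis using s1 s2 by linarith
    qed
    ultimately show ?thesis using cTD cDT by (simp add: of_nat_diff)
  qed
  then have A: "SD * int (card T) \<le> int (card W) * int (card D)" by (simp add: algebra_simps)
  have B: "(int (?L f1) - 1) * int (card D) + 1 \<le> SD" using sD unfolding SD_def by linarith
  have "(int (?L f1) - 1) * int (card D) * int (card T) < SD * int (card T)"
  proof -
    have "(int (?L f1) - 1) * int (card D) < SD" using B by linarith
    then show ?thesis using cTpos by (simp add: mult_strict_right_mono)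
  qed
  then have "((int (?L f1) - 1) * int (card T)) * int (card D) < int (card W) * int (card D)"
    using A by (simp add: ac_simps)
  then have up: "(int (?L f1) - 1) * int (card T) < int (card W)"
    using cD1 by (simp add: mult_less_cancel_right)
  show ?thesis
  proof (intro exI[of _ \<sigma>] conjI v ballI)
    fix f assume fT': "f \<in> T"
    have "int (?L f) * int (card T) \<le> int (?L f1) * int (card T)" using f1 fT' by (simp add: mult_right_mono)
    then show "int (?L f) * int (card T) < int (card W) + int (card T)" using up by (simp add: algebra_simps)
    have "(?L f0 + 1) * card T \<le> (?L f + 1) * card T" using f0 fT' by simp
    then have "card W < (?L f + 1) * card T" using low by linarith
    then have "int (card W) < int ((?L f + 1) * card T)" by (simp only: of_nat_less_iff)
    then show "int (card W) < (int (?L f) + 1) * int (card T)" by (simp add: algebra_simps)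
  qed
qed



lemma MNS_in:
  assumes "finite Fr" "Fr \<noteq> {}"
  shows "MNS V E F s Fr Vr \<in> minimizers V E F s Fr Vr"
proof -
  define P where "P = {T. T \<noteq> {} \<and> T \<subseteq> Fr}"
  have "P \<subseteq> Pow Fr" unfolding P_def by auto
  then have fP: "finite P" using assms(1) finite_subset by blast
  have Pne: "P \<noteq> {}" unfolding P_def using assms by auto
  define T0 where "T0 = arg_min_on (ratio V E F s Vr) P"
  have T0: "T0 \<in> P" "\<forall>T\<in>P. ratio V E F s Vr T0 \<le> ratio V E F s Vr T"
    unfolding T0_def using arg_min_if_finite(1)[OF fP Pne] arg_min_least[OF fP Pne] by auto
  define M where "M = minimizers V E F s Fr Vr"
  have MP: "M \<subseteq> P" unfolding M_def P_def minimizers_def by auto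
  have fM: "finite M" using MP fP finite_subset by blast
  have T0M: "T0 \<in> M" using T0 unfolding M_def minimizers_def P_def by auto
  then have Mne: "M \<noteq> {}" by auto
  define Tm where "Tm = arg_min_on (\<lambda>T. - int (card T)) M"
  have Tm: "Tm \<in> M" "\<forall>T\<in>M. card T \<le> card Tm"
    unfolding Tm_def using arg_min_if_finite(1)[OF fM Mne] arg_min_least[OF fM Mne, of _ "\<lambda>T. - int (card T)"] by auto
  then have "\<exists>T. T \<in> M \<and> (\<forall>T'\<in>M. card T' \<le> card T)" by blast
  then show ?thesis unfolding MNS_def M_def[symmetric] by (rule someI_ex[where P = "\<lambda>T. T \<in> M \<and> (\<forall>T'\<in>M. card T' \<le> card T)", THEN conjunct1])
qed

lemma rem_Suc: "remaining V E F s (Suc i) = (fst (remaining V E F s i) - classF V E F s i, snd (remaining V E F s i) - classV V E F s i)"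
  by (simp add: classF_def classV_def Let_def split_beta)

declare remaining.simps(2)[simp del]

lemma classF_eq: "classF V E F s i = (if fst (remaining V E F s i) = {} then {} else MNS V E F s (fst (remaining V E F s i)) (snd (remaining V E F s i)))"
  by (simp add: classF_def split_beta)

lemma rem_eq: "fst (remaining V E F s n) = F - (\<Union>j<n. classF V E F s j) \<and> snd (remaining V E F s n) = V - (\<Union>j<n. classV V E F s j)"
proof (induction n)
  case 0 then show ?case by simp
next
  case (Suc n)
  have "fst (remaining V E F s (Suc n)) = (F - (\<Union>j<n. classF V E F s j)) - classF V E F s n"
    using Suc.IH by (simp add: rem_Suc)
  moreover have "snd (remaining V E F s (Suc n)) = (V - (\<Union>j<n. classV V E F s j)) - classV V E F s n"
    using Suc.IH by (simp add: rem_Suc)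
  moreover have "(\<Union>j<Suc n. classF V E F s j) = classF V E F s n \<union> (\<Union>j<n. classF V E F s j)"
    by (simp add: lessThan_Suc)
  moreover have "(\<Union>j<Suc n. classV V E F s j) = classV V E F s n \<union> (\<Union>j<n. classV V E F s j)"
    by (simp add: lessThan_Suc)
  moreover have dd: "\<And>A B C. (A::'z set) - B - C = A - (C \<union> B)" by blast
  ultimately show ?case by (simp only: dd)
qed

lemma rF_fin: "finite F \<Longrightarrow> finite (fst (remaining V E F s i))"
  using rem_eq[of V E F s i] by simp

lemma classF_sub:
  assumes "finite F"
  shows "classF V E F s i \<subseteq> fst (remaining V E F s i)"
proof (cases "fst (remaining V E F s i) = {}")
  case True then show ?thesis by (simp add: classF_eq)
next
  case False
  have "finite (fst (remaining V E F s i))" using rF_fin assms(1) by blast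
  then show ?thesis using MNS_in[OF _ False, of V E F s "snd (remaining V E F s i)"] False unfolding classF_eq minimizers_def by auto
qed

lemma classF_ne:
  assumes "finite F" "fst (remaining V E F s i) \<noteq> {}"
  shows "classF V E F s i \<noteq> {}"
proof -
  have "finite (fst (remaining V E F s i))" using rF_fin assms(1) by blast
  then show ?thesis using MNS_in[OF _ assms(2), of V E F s "snd (remaining V E F s i)"] assms(2) unfolding classF_eq minimizers_def by auto
qed

lemma classV_sub: "classV V E F s i \<subseteq> snd (remaining V E F s i)"
  unfolding classV_def by auto

lemma classF_F: "classF V E F s i \<subseteq> F" if "finite F"
  using classF_sub[OF that, of V E s i] rem_eq[of V E F s i] by auto

lemma classV_V: "classV V E F s i \<subseteq> V"
  using classV_sub[of V E F s i] rem_eq[of V E F s i] by auto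

lemma classF_disj:
  assumes "finite F" "i \<noteq> j"
  shows "classF V E F s i \<inter> classF V E F s j = {}"
proof -
  have *: "classF V E F s i \<inter> classF V E F s j = {}" if "i < j" for i j
    using classF_sub[OF assms(1), of V E s j] rem_eq[of V E F s j] that by auto
  show ?thesis
  proof (cases "i < j")
    case True then show ?thesis using * by blast
  next
    case False then have ji: "j < i" using assms(2) by simp
    show ?thesis using *[OF ji] by blast
  qed
qed

lemma classV_disj:
  assumes "i \<noteq> j"
  shows "classV V E F s i \<inter> classV V E F s j = {}"
proof -
  have *: "classV V E F s i \<inter> classV V E F s j = {}" if "i < j" for i j
    using classV_sub[of V E F s j] rem_eq[of V E F s j] that by auto
  show ?thesis
  proof (cases "i < j")
    case True then show ?thesis using * by blast
  next
    case False then have ji: "j < i" using assms by simp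
    show ?thesis using *[OF ji] by blast
  qed
qed

lemma rem_card:
  assumes "finite F"
  shows "card (fst (remaining V E F s i)) + i \<le> card F \<or> fst (remaining V E F s i) = {}"
proof (induction i)
  case 0 then show ?case by simp
next
  case (Suc i)
  show ?case
  proof (cases "fst (remaining V E F s i) = {}")
    case True then show ?thesis by (simp add: rem_Suc)
  next
    case False
    have fr: "finite (fst (remaining V E F s i))" using rF_fin assms(1) by blast
    have sub: "classF V E F s i \<subseteq> fst (remaining V E F s i)" using classF_sub[OF assms] .
    have ne: "classF V E F s i \<noteq> {}" using classF_ne[OF assms False] .
    have fc: "finite (classF V E F s i)" using fr sub finite_subset by blast
    have "card (classF V E F s i) \<ge> 1" using ne fc by (metis One_nat_def Suc_leI card_gt_0_iff)
    moreover have "card (fst (remaining V E F s (Suc i))) = card (fst (remaining V E F s i)) - card (classF V E F s i)"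
      using sub fc by (simp add: rem_Suc card_Diff_subset)
    moreover have "card (classF V E F s i) \<le> card (fst (remaining V E F s i))" using sub fr card_mono by blast
    moreover have "card (fst (remaining V E F s i)) + i \<le> card F" using Suc.IH False by blast
    ultimately show ?thesis by (intro disjI1) linarith
  qed
qed

lemma rem_end:
  assumes "finite F"
  shows "fst (remaining V E F s (card F)) = {}"
proof -
  have fr: "finite (fst (remaining V E F s (card F)))" using rF_fin assms(1) by blast
  show ?thesis using rem_card[OF assms, of V E s "card F"] fr by auto
qed

lemma cover:
  assumes "finite F" "v \<in> V" "Nfac E F s v \<noteq> {}"
  shows "\<exists>i. v \<in> classV V E F s i"
proof -
  obtain f where f: "f \<in> Nfac E F s v" using assms by blast
  then have "f \<in> F" unfolding Nfac_def by auto
  then obtain i where i: "f \<in> classF V E F s i"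
    using rem_end[OF assms(1), of V E s] rem_eq[of V E F s "card F"] by auto
  have "v \<in> Acl V E F s (classF V E F s i)" unfolding Acl_def using assms(2) f i by auto
  show ?thesis
  proof (cases "v \<in> snd (remaining V E F s i)")
    case True then show ?thesis using \<open>v \<in> Acl V E F s (classF V E F s i)\<close> unfolding classV_def by auto
  next
    case False then show ?thesis using rem_eq[of V E F s i] assms(2) by auto
  qed
qed

lemma class_hall:
  assumes "finite F" "finite V" "classF V E F s i \<noteq> {}" "S \<subseteq> classF V E F s i"
  shows "card (classV V E F s i) * card S \<le> card {w\<in>classV V E F s i. \<exists>f\<in>S. f \<in> Nfac E F s w} * card (classF V E F s i)"
proof (cases "S = {}")
  case True then show ?thesis by simp
next
  case Sne: False
  let ?Fr = "fst (remaining V E F s i)" and ?Vr = "snd (remaining V E F s i)"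
  have Frne: "?Fr \<noteq> {}"
  proof
    assume "?Fr = {}"
    then have "classF V E F s i = {}" by (simp add: classF_eq)
    with assms(3) show False by simp
  qed
  have ce: "classF V E F s i = MNS V E F s ?Fr ?Vr" using Frne by (simp add: classF_eq)
  have fr: "finite ?Fr" using rF_fin assms(1) by blast
  have "classF V E F s i \<in> minimizers V E F s ?Fr ?Vr" unfolding ce using MNS_in[OF fr Frne] .
  moreover have "S \<subseteq> ?Fr" using assms(4) classF_sub[OF assms(1)] by blast
  ultimately have r: "ratio V E F s ?Vr (classF V E F s i) \<le> ratio V E F s ?Vr S"
    unfolding minimizers_def using Sne by auto
  have e1: "Acl V E F s (classF V E F s i) \<inter> ?Vr = classV V E F s i" unfolding classV_def by simp
  have e2: "Acl V E F s S \<inter> ?Vr = {w\<in>classV V E F s i. \<exists>f\<in>S. f \<in> Nfac E F s w}"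
    unfolding classV_def Acl_def using assms(4) by auto
  have SF: "S \<subseteq> F" using assms(4) classF_F[OF assms(1), of V E s i] by blast
  have fS: "finite S" using finite_subset[OF SF assms(1)] .
  have cS: "card S > 0" using fS Sne by (simp add: card_gt_0_iff)
  have fC: "finite (classF V E F s i)" using finite_subset[OF classF_F[OF assms(1)] assms(1)] .
  have cC: "card (classF V E F s i) > 0" using fC assms(3) by (simp add: card_gt_0_iff)
  have "real (card (classV V E F s i)) / real (card (classF V E F s i)) \<le> real (card {w\<in>classV V E F s i. \<exists>f\<in>S. f \<in> Nfac E F s w}) / real (card S)"
    using r unfolding ratio_def e1 e2 .
  then have "real (card (classV V E F s i)) * real (card S) \<le> real (card {w\<in>classV V E F s i. \<exists>f\<in>S. f \<in> Nfac E F s w}) * real (card (classF V E F s i))"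
    using cS cC by (simp add: divide_le_eq le_divide_eq field_simps)
  then show ?thesis by (simp flip: of_nat_mult)
qed

lemma near_int:
  fixes L :: int and x :: real
  assumes "of_int L < x + 1" "x < of_int L + 1"
  shows "of_int L = of_int \<lfloor>x\<rfloor> \<or> (of_int L :: real) = of_int \<lceil>x\<rceil>"
proof (cases "of_int L \<le> x")
  case True
  then have "\<lfloor>x\<rfloor> = L" using assms by (intro floor_unique) auto
  then show ?thesis by simp
next
  case False
  then have "\<lceil>x\<rceil> = L" using assms by (intro ceiling_unique) auto
  then show ?thesis by simp
qed

lemma sum_ind_card:
  assumes "finite A"
  shows "(\<Sum>v\<in>A. if P v then 1 else (0::real)) = real (card {v\<in>A. P v})"
  using assms by (simp add: sum.inter_filter[symmetric])

theorem mainTheorem10: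
  fixes V :: "'v set" and E :: "('v \<times> 'v) set" and F :: "'f set" and s :: "'f \<Rightarrow> 'v"
  assumes "finite V" and "E \<subseteq> V \<times> V" and "finite F" and "\<forall>f \<in> F. s f \<in> V"
  shows "\<exists>\<sigma>. rounded V E F s \<sigma>"
proof -
  define adj where "adj = (\<lambda>w f. f \<in> Nfac E F s w)"
  let ?cF = "classF V E F s" and ?cV = "classV V E F s"
  have ex: "\<forall>i. \<exists>\<tau>. ?cF i \<noteq> {} \<longrightarrow> (validA (?cV i) (?cF i) adj \<tau> \<and>
      (\<forall>f\<in>?cF i. int (ld (?cV i) \<tau> f) * int (card (?cF i)) < int (card (?cV i)) + int (card (?cF i))
           \<and> int (card (?cV i)) < (int (ld (?cV i) \<tau> f) + 1) * int (card (?cF i))))"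
  proof
    fix i
    show "\<exists>\<tau>. ?cF i \<noteq> {} \<longrightarrow> (validA (?cV i) (?cF i) adj \<tau> \<and>
      (\<forall>f\<in>?cF i. int (ld (?cV i) \<tau> f) * int (card (?cF i)) < int (card (?cV i)) + int (card (?cF i))
           \<and> int (card (?cV i)) < (int (ld (?cV i) \<tau> f) + 1) * int (card (?cF i))))"
    proof (cases "?cF i = {}")
      case True then show ?thesis by simp
    next
      case False
      have fW: "finite (?cV i)" using finite_subset[OF classV_V assms(1)] .
      have fT: "finite (?cF i)" using finite_subset[OF classF_F[OF assms(3)] assms(3)] .
      have cov: "\<forall>w\<in>?cV i. \<exists>f\<in>?cF i. adj w f" unfolding adj_def classV_def Acl_def by auto
      have hall: "\<forall>S\<subseteq>?cF i. card (?cV i) * card S \<le> card {w\<in>?cV i. \<exists>f\<in>S. adj w f} * card (?cF i)"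
        unfolding adj_def using class_hall[OF assms(3) assms(1) False] by blast
      show ?thesis using balanced[OF fW fT False cov hall] False by blast
    qed
  qed
  obtain \<tau> where \<tau>: "\<forall>i. ?cF i \<noteq> {} \<longrightarrow> (validA (?cV i) (?cF i) adj (\<tau> i) \<and>
      (\<forall>f\<in>?cF i. int (ld (?cV i) (\<tau> i) f) * int (card (?cF i)) < int (card (?cV i)) + int (card (?cF i))
           \<and> int (card (?cV i)) < (int (ld (?cV i) (\<tau> i) f) + 1) * int (card (?cF i))))"
    using choice[OF ex] by blast
  define cls where "cls v = (SOME i. v \<in> ?cV i)" for v
  define \<sigma> where "\<sigma> v f = (if (\<exists>i. v \<in> ?cV i) \<and> \<tau> (cls v) v = f then 1 else (0::real))" for v f
  have cls: "cls v = i" if "v \<in> ?cV i" for v i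
    unfolding cls_def
  proof (rule some_equality)
    show "v \<in> ?cV i" by (rule that)
    fix j assume "v \<in> ?cV j"
    then show "j = i" using that classV_disj[of j i V E F s] by blast
  qed
  have nz: "?cF i \<noteq> {}" if "v \<in> ?cV i" for v i
    using that unfolding classV_def Acl_def by auto
  have \<tau>i: "\<tau> i v \<in> ?cF i \<and> \<tau> i v \<in> Nfac E F s v" if "v \<in> ?cV i" for v i
    using \<tau> nz[OF that] that unfolding validA_def adj_def by blast
  have \<sigma>v: "\<sigma> v f = (if \<tau> i v = f then 1 else 0)" if "v \<in> ?cV i" for v i f
    using cls[OF that] that unfolding \<sigma>_def by auto
  have \<sigma>n: "\<sigma> v f = 0" if "\<not> (\<exists>i. v \<in> ?cV i)" for v f
    using that unfolding \<sigma>_def by auto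
  have cp: "client_profile V E F s \<sigma>"
    unfolding client_profile_def
  proof (intro conjI ballI impI)
    fix v f assume v: "v \<in> V" and f: "f \<in> F"
    show "0 \<le> \<sigma> v f" "\<sigma> v f \<le> 1" unfolding \<sigma>_def by auto
    assume "f \<notin> Nfac E F s v"
    then show "\<sigma> v f = 0"
    proof (cases "\<exists>i. v \<in> ?cV i")
      case True
      then obtain i where i: "v \<in> ?cV i" by blast
      then show ?thesis using \<sigma>v[OF i] \<tau>i[OF i] \<open>f \<notin> Nfac E F s v\<close> by auto
    next
      case False then show ?thesis using \<sigma>n by blast
    qed
  next
    fix v assume v: "v \<in> V" and ne: "Nfac E F s v \<noteq> {}"
    obtain i where i: "v \<in> ?cV i" using cover[OF assms(3) v ne] by blast
    have "\<tau> i v \<in> F" using \<tau>i[OF i] classF_F[OF assms(3)] by blast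
    then show "(\<Sum>f\<in>F. \<sigma> v f) = 1" using \<sigma>v[OF i] assms(3) by (simp add: sum.delta')
  qed
  have rd: "(\<forall>f \<in> ?cF i. load V \<sigma> f = of_int \<lfloor>class_load V E F s i\<rfloor> \<or> load V \<sigma> f = of_int \<lceil>class_load V E F s i\<rceil>) \<and>
        (\<forall>v \<in> ?cV i. \<exists>!g. g \<in> ?cF i \<and> \<sigma> v g = 1)" if ne: "?cF i \<noteq> {}" for i
  proof (intro conjI ballI)
    fix v assume v: "v \<in> ?cV i"
    show "\<exists>!g. g \<in> ?cF i \<and> \<sigma> v g = 1"
    proof (rule ex1I[of _ "\<tau> i v"])
      show "\<tau> i v \<in> ?cF i \<and> \<sigma> v (\<tau> i v) = 1" using \<tau>i[OF v] \<sigma>v[OF v] by simp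
      fix g assume "g \<in> ?cF i \<and> \<sigma> v g = 1"
      then show "g = \<tau> i v" using \<sigma>v[OF v, of g] by (auto split: if_splits)
    qed
  next
    fix f assume f: "f \<in> ?cF i"
    have pt: "\<sigma> v f = (if v \<in> ?cV i \<and> \<tau> i v = f then 1 else 0)" for v
    proof (cases "\<exists>j. v \<in> ?cV j")
      case True
      then obtain j where j: "v \<in> ?cV j" by blast
      show ?thesis
      proof (cases "j = i")
        case True then show ?thesis using \<sigma>v[OF j] j by simp
      next
        case False
        have "\<tau> j v \<noteq> f" using \<tau>i[OF j] f classF_disj[OF assms(3) False, of V E s] by blast
        moreover have "v \<notin> ?cV i" using j classV_disj[OF False, of V E F s] by blast
        ultimately show ?thesis using \<sigma>v[OF j] by simp
      qed
    next
      case False then show ?thesis using \<sigma>n by auto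
    qed
    have "load V \<sigma> f = real (card {v\<in>V. v \<in> ?cV i \<and> \<tau> i v = f})"
      unfolding load_def pt using sum_ind_card[OF assms(1)] by simp
    also have "{v\<in>V. v \<in> ?cV i \<and> \<tau> i v = f} = {w\<in>?cV i. \<tau> i w = f}"
      using classV_V[of V E F s i] by blast
    finally have ld: "load V \<sigma> f = of_int (int (ld (?cV i) (\<tau> i) f))" unfolding ld_def by simp
    have fT: "finite (?cF i)" using finite_subset[OF classF_F[OF assms(3)] assms(3)] .
    have Tp: "real (card (?cF i)) > 0" using fT ne by (simp add: card_gt_0_iff)
    define L where "L = int (ld (?cV i) (\<tau> i) f)"
    have b1: "L * int (card (?cF i)) < int (card (?cV i)) + int (card (?cF i))"
      and b2: "int (card (?cV i)) < (L + 1) * int (card (?cF i))"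
      using \<tau> ne f unfolding L_def by blast+
    have r1: "real_of_int L * real (card (?cF i)) < real (card (?cV i)) + real (card (?cF i))"
    proof -
      have "real_of_int (L * int (card (?cF i))) < real_of_int (int (card (?cV i)) + int (card (?cF i)))"
        using b1 by (simp only: of_int_less_iff)
      then show ?thesis by simp
    qed
    have r2: "real (card (?cV i)) < (real_of_int L + 1) * real (card (?cF i))"
    proof -
      have "real_of_int (int (card (?cV i))) < real_of_int ((L + 1) * int (card (?cF i)))"
        using b2 by (simp only: of_int_less_iff)
      then show ?thesis by simp
    qed
    have cl: "class_load V E F s i = real (card (?cV i)) / real (card (?cF i))" unfolding class_load_def by simp
    have "real_of_int L < class_load V E F s i + 1"
      unfolding cl using r1 Tp by (simp add: field_simps)
    moreover have "class_load V E F s i < real_of_int L + 1"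
      unfolding cl using r2 Tp by (simp add: field_simps)
    ultimately show "load V \<sigma> f = of_int \<lfloor>class_load V E F s i\<rfloor> \<or> load V \<sigma> f = of_int \<lceil>class_load V E F s i\<rceil>"
      using near_int ld unfolding L_def by metis
  qed
  show ?thesis unfolding rounded_def using cp rd by blast
qed

end
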